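(* Let $\gamma > \sqrt{2}$ and let $I$ be a $\gamma$-stable instance of the Euclidean Steiner tree problem with optimal Steiner tree $\mathrm{OPT}$. If $a_1, a_2$ are distinct terminals and $b$ is a Steiner point such that $a_1 b$ and $a_2 b$ are both edges of $\mathrm{OPT}$, then the angle $\theta = \angle a_1 b a_2$ satisfies $\theta > \pi/2$.
   Context: An instance of the Euclidean Steiner tree problem consists of a finite set $V \subset \mathbb{R}^d$, a set $T \subseteq V$ of terminals, and the complete graph on $V$ with edge weights $w_{uv} = \|u - v\|$. Points of $V \setminus T$ are Steiner points. A Steiner tree is a tree in this complete graph whose vertex set contains all of $T$; its weight is the sum of its edge weights. For $\gamma > 1$, the instance is $\gamma$-stable if it has a minimum-weight Steiner tree $\mathrm{OPT}$ such that for every $w' : V \times V \to \mathbb{R}_{\ge 0}$ with $w_{uv} \le w'_{uv} \le \gamma w_{uv}$ for all $u,v$, every minimum-weight Steiner tree with respect to $w'$ equals $\mathrm{OPT}$ (the $w'$ need not be Euclidean). $\angle a_1 b a_2 \in [0,\pi]$ is the angle at $b$ between the vectors $a_1 - b$ and $a_2 - b$. *)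

theory Defs
  imports "HOL-Analysis.Analysis"
begin

text \<open>A (sub)tree of the complete graph on a vertex set V is a pair (S, E) with
  S the vertex set and E a set of edges, each edge a 2-element subset of S.\<close>

definition graph_edges :: "'a set \<Rightarrow> 'a set set" where
  "graph_edges S = {e. \<exists>u v. u \<in> S \<and> v \<in> S \<and> u \<noteq> v \<and> e = {u, v}}"

definition connected_graph :: "'a set \<Rightarrow> 'a set set \<Rightarrow> bool" where
  "connected_graph S E \<longleftrightarrow>
     (\<forall>u\<in>S. \<forall>v\<in>S. (u, v) \<in> ({(x, y). {x, y} \<in> E})\<^sup>*)"

definition is_tree :: "'a set \<Rightarrow> 'a set set \<Rightarrow> bool" where
  "is_tree S E \<longleftrightarrow> finite S \<and> S \<noteq> {} \<and> E \<subseteq> graph_edges S \<and>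
     connected_graph S E \<and> card E = card S - 1"

definition steiner_tree :: "'a set \<Rightarrow> 'a set \<Rightarrow> 'a set \<times> 'a set set \<Rightarrow> bool" where
  "steiner_tree V T t \<longleftrightarrow> fst t \<subseteq> V \<and> T \<subseteq> fst t \<and> is_tree (fst t) (snd t)"

definition tree_weight :: "('a \<Rightarrow> 'a \<Rightarrow> real) \<Rightarrow> 'a set \<times> 'a set set \<Rightarrow> real" where
  "tree_weight w t = (\<Sum>e\<in>snd t. THE r. \<exists>u v. e = {u, v} \<and> u \<noteq> v \<and> r = w u v)"

definition min_steiner_tree ::
  "'a set \<Rightarrow> 'a set \<Rightarrow> ('a \<Rightarrow> 'a \<Rightarrow> real) \<Rightarrow> 'a set \<times> 'a set set \<Rightarrow> bool" where
  "min_steiner_tree V T w t \<longleftrightarrow> steiner_tree V T t \<and>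
     (\<forall>t'. steiner_tree V T t' \<longrightarrow> tree_weight w t \<le> tree_weight w t')"

definition euclid_w :: "'a::real_normed_vector \<Rightarrow> 'a \<Rightarrow> real" where
  "euclid_w u v = norm (u - v)"

definition gamma_stable ::
  "real \<Rightarrow> 'a::real_normed_vector set \<Rightarrow> 'a set \<Rightarrow> 'a set \<times> 'a set set \<Rightarrow> bool" where
  "gamma_stable \<gamma> V T OPT \<longleftrightarrow> min_steiner_tree V T euclid_w OPT \<and>
     (\<forall>w'. (\<forall>u\<in>V. \<forall>v\<in>V. w' u v = w' v u \<and>
              euclid_w u v \<le> w' u v \<and> w' u v \<le> \<gamma> * euclid_w u v) \<longrightarrow>
        (\<forall>t. min_steiner_tree V T w' t \<longrightarrow> t = OPT))"

definition vangle :: "'a::euclidean_space \<Rightarrow> 'a \<Rightarrow> 'a \<Rightarrow> real" where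
  "vangle a1 b a2 = arccos (((a1 - b) \<bullet> (a2 - b)) / (norm (a1 - b) * norm (a2 - b)))"

end

theory Submission
  imports Defs
begin

lemma cross_edge:
  assumes "(r, s) \<in> Rel\<^sup>*" "r \<in> A" "s \<notin> A"
  shows "\<exists>x y. x \<in> A \<and> y \<notin> A \<and> (x, y) \<in> Rel"
  using assms by (induction rule: rtrancl_induct) auto

lemma graph_edges_sub: "graph_edges S \<subseteq> Pow S"
  unfolding graph_edges_def by auto

lemma conn_card:
  assumes fin: "finite S" and sub: "E \<subseteq> graph_edges S" and con: "connected_graph S E"
    and ne: "S \<noteq> {}"
  shows "card S \<le> card E + 1"
proof -
  have finE: "finite E"
    using finite_subset[OF subset_trans[OF sub graph_edges_sub]] fin by simp
  have claim: "n < card S \<longrightarrow> (\<exists>R\<subseteq>S. card R = n + 1 \<and> n \<le> card {e\<in>E. e \<subseteq> R})" for n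
  proof (induction n)
    case 0
    obtain s where "s \<in> S" using ne by auto
    then show ?case by (intro impI exI[of _ "{s}"]) auto
  next
    case (Suc n)
    show ?case
    proof
      assume lt: "Suc n < card S"
      then obtain R where R: "R \<subseteq> S" "card R = n + 1" "n \<le> card {e\<in>E. e \<subseteq> R}"
        using Suc.IH by auto
      have "\<not> S \<subseteq> R" using R lt fin by (metis Suc_eq_plus1 card_mono finite_subset leD)
      then obtain s where s: "s \<in> S" "s \<notin> R" by auto
      have "R \<noteq> {}" using R by auto
      then obtain r where r: "r \<in> R" by auto
      have "(r, s) \<in> ({(x, y). {x, y} \<in> E})\<^sup>*" using con r s R unfolding connected_graph_def by auto
      from cross_edge[OF this r s(2)] obtain x y where xy: "x \<in> R" "y \<notin> R" "{x, y} \<in> E" by auto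
      have yS: "y \<in> S" using xy(3) sub graph_edges_sub by blast
      define R' where "R' = insert y R"
      have finR: "finite R" using R fin finite_subset by blast
      have cR': "card R' = Suc n + 1" using R xy finR unfolding R'_def by simp
      have "insert {x, y} {e\<in>E. e \<subseteq> R} \<subseteq> {e\<in>E. e \<subseteq> R'}"
        using xy unfolding R'_def by auto
      moreover have "{x, y} \<notin> {e\<in>E. e \<subseteq> R}" using xy by auto
      moreover have "finite {e\<in>E. e \<subseteq> R'}" using finE by auto
      moreover have "finite {e\<in>E. e \<subseteq> R}" using finE by auto
      ultimately have "card (insert {x, y} {e\<in>E. e \<subseteq> R}) \<le> card {e\<in>E. e \<subseteq> R'}"
        "card (insert {x, y} {e\<in>E. e \<subseteq> R}) = card {e\<in>E. e \<subseteq> R} + 1"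
        by (metis (no_types) card_mono, metis (no_types) card_insert_disjoint Suc_eq_plus1)
      then have "card {e\<in>E. e \<subseteq> R} + 1 \<le> card {e\<in>E. e \<subseteq> R'}" by simp
      then have "Suc n \<le> card {e\<in>E. e \<subseteq> R'}" using R by linarith
      moreover have "R' \<subseteq> S" using R yS unfolding R'_def by auto
      ultimately show "\<exists>R\<subseteq>S. card R = Suc n + 1 \<and> Suc n \<le> card {e\<in>E. e \<subseteq> R}"
        using cR' by blast
    qed
  qed
  have "card S > 0" using fin ne by auto
  then obtain R where R: "R \<subseteq> S" "card R = card S" "card S - 1 \<le> card {e\<in>E. e \<subseteq> R}"
    using claim[of "card S - 1"] by auto
  have "card {e\<in>E. e \<subseteq> R} \<le> card E" using finE by (auto intro: card_mono)
  then show ?thesis using R by linarith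
qed

definition ew :: "('a \<Rightarrow> 'a \<Rightarrow> real) \<Rightarrow> 'a set \<Rightarrow> real" where
  "ew w e = (THE r. \<exists>u v. e = {u, v} \<and> u \<noteq> v \<and> r = w u v)"

lemma tw_ew: "tree_weight w t = sum (ew w) (snd t)"
  unfolding tree_weight_def ew_def by simp

lemma ew_eq:
  assumes "u \<noteq> v" "w u v = w v u"
  shows "ew w {u, v} = w u v"
  unfolding ew_def
proof (rule the_equality)
  show "\<exists>x y. {u, v} = {x, y} \<and> x \<noteq> y \<and> w u v = w x y" using assms by blast
next
  fix r assume "\<exists>x y. {u, v} = {x, y} \<and> x \<noteq> y \<and> r = w x y"
  then obtain x y where "{u, v} = {x, y}" "r = w x y" by blast
  then show "r = w u v" using assms by (auto simp: doubleton_eq_iff)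
qed


lemma core:
  fixes V T :: "'a::euclidean_space set" and OPT :: "'a set \<times> 'a set set"
    and \<gamma> :: real and a1 a2 b :: 'a
  assumes finV: "finite V" and TV: "T \<subseteq> V"
    and g: "\<gamma> > sqrt 2"
    and stab: "gamma_stable \<gamma> V T OPT"
    and a1T: "a1 \<in> T" and a2T: "a2 \<in> T" and a12: "a1 \<noteq> a2"
    and bVT: "b \<in> V - T"
    and e1: "{a1, b} \<in> snd OPT" and e2: "{a2, b} \<in> snd OPT"
    and le: "norm (a1 - b) \<le> norm (a2 - b)"
  shows "(a1 - b) \<bullet> (a2 - b) < 0"
proof (rule ccontr)
  assume "\<not> (a1 - b) \<bullet> (a2 - b) < 0"
  then have dot: "(a1 - b) \<bullet> (a2 - b) \<ge> 0" by simp
  obtain S E where OPT: "OPT = (S, E)" by (cases OPT)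
  have minO: "min_steiner_tree V T euclid_w (S, E)" using stab OPT unfolding gamma_stable_def by simp
  then have SV: "S \<subseteq> V" and TS: "T \<subseteq> S" and tr: "is_tree S E"
    unfolding min_steiner_tree_def steiner_tree_def by auto
  have finS: "finite S" and subE: "E \<subseteq> graph_edges S" and conE: "connected_graph S E"
    and cardE: "card E = card S - 1" and neS: "S \<noteq> {}"
    using tr unfolding is_tree_def by auto
  have finE: "finite E"
    using finite_subset[OF subset_trans[OF subE graph_edges_sub]] finS by simp
  have E1: "{a1, b} \<in> E" and E2: "{a2, b} \<in> E" using e1 e2 OPT by auto
  have a1b: "a1 \<noteq> b" and a2b: "a2 \<noteq> b" using a1T a2T bVT by auto
  have a1S: "a1 \<in> S" and a2S: "a2 \<in> S" using a1T a2T TS by auto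
  have bS: "b \<in> S" using E1 subE graph_edges_sub by blast
  have g1: "\<gamma> \<ge> 1" proof -
    have "sqrt 1 < sqrt 2" by (simp only: real_sqrt_less_iff)
    then have "1 < sqrt 2" by (simp only: real_sqrt_one) then show ?thesis using g by linarith
  qed
  define c where "c = (\<gamma> - 1) * norm (a2 - b)"
  have c0: "c \<ge> 0" using g1 unfolding c_def by simp
  define w' where "w' = (\<lambda>u v::'a. norm (u - v) + (if {u, v} = {a2, b} then c else 0))"
  have wsym: "w' u v = w' v u" for u v
    unfolding w'_def by (simp add: insert_commute norm_minus_commute)
  have wlo: "euclid_w u v \<le> w' u v" for u v
    unfolding w'_def euclid_w_def using c0 by simp
  have whi: "w' u v \<le> \<gamma> * euclid_w u v" for u v
  proof (cases "{u, v} = {a2, b}")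
    case True
    then have "norm (u - v) = norm (a2 - b)"
      by (auto simp: doubleton_eq_iff norm_minus_commute)
    then show ?thesis using True unfolding w'_def euclid_w_def c_def by (simp add: algebra_simps)
  next
    case False
    have "norm (u - v) \<le> \<gamma> * norm (u - v)" using g1 by (simp add: mult_le_cancel_right1)
    then show ?thesis using False unfolding w'_def euclid_w_def by simp
  qed
  have uniq: "\<And>t. min_steiner_tree V T w' t \<Longrightarrow> t = OPT"
    using stab wsym wlo whi unfolding gamma_stable_def by blast
  define E' where "E' = insert {a1, a2} (E - {{a2, b}})"
  have ne12: "{a1, a2} \<noteq> {a2, b}" using a1b a12 by (auto simp: doubleton_eq_iff)
  have ne1b: "{a1, b} \<noteq> {a2, b}" using a12 by (auto simp: doubleton_eq_iff)
  have subE': "E' \<subseteq> graph_edges S"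
    using subE a1S a2S a12 unfolding E'_def graph_edges_def by auto
  have stepE: "(x, y) \<in> ({(x, y). {x, y} \<in> E'})\<^sup>*" if "{x, y} \<in> E" for x y
  proof (cases "{x, y} = {a2, b}")
    case False
    then show ?thesis using that unfolding E'_def by auto
  next
    case True
    have r1: "(a2, a1) \<in> {(x, y). {x, y} \<in> E'}" "(a1, a2) \<in> {(x, y). {x, y} \<in> E'}"
      unfolding E'_def by (auto simp: insert_commute)
    have r2: "(a1, b) \<in> {(x, y). {x, y} \<in> E'}" "(b, a1) \<in> {(x, y). {x, y} \<in> E'}"
      using E1 ne1b unfolding E'_def by (auto simp: insert_commute)
    have "(a2, b) \<in> ({(x, y). {x, y} \<in> E'})\<^sup>*" "(b, a2) \<in> ({(x, y). {x, y} \<in> E'})\<^sup>*"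
      using r1 r2 by (auto intro: rtrancl_into_rtrancl[OF r_into_rtrancl])
    then show ?thesis using True by (auto simp: doubleton_eq_iff)
  qed
  have conE': "connected_graph S E'"
    unfolding connected_graph_def
  proof (intro ballI)
    fix u v assume "u \<in> S" "v \<in> S"
    then have "(u, v) \<in> ({(x, y). {x, y} \<in> E})\<^sup>*" using conE unfolding connected_graph_def by auto
    then show "(u, v) \<in> ({(x, y). {x, y} \<in> E'})\<^sup>*"
    proof (induction rule: rtrancl_induct)
      case base then show ?case by simp
    next
      case (step y z)
      have "{y, z} \<in> E" using step.hyps(2) by simp
      then have "(y, z) \<in> ({(x, y). {x, y} \<in> E'})\<^sup>*" by (rule stepE)
      with step.IH show ?case by (rule rtrancl_trans)
    qed
  qed
  have cardS2: "card S \<ge> 1" using finS neS by (simp add: Suc_leI card_gt_0_iff)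
  have cdiff: "card (E - {{a2, b}}) = card E - 1" using E2 finE by simp
  have notin: "{a1, a2} \<notin> E - {{a2, b}}"
  proof
    assume "{a1, a2} \<in> E - {{a2, b}}"
    then have "E' = E - {{a2, b}}" unfolding E'_def by auto
    then have "card S \<le> card E - 1 + 1" using conn_card[OF finS subE' conE' neS] cdiff by simp
    moreover have "card E \<ge> 1" proof -
      have "card E > 0" using E2 finE card_gt_0_iff by auto
      then show ?thesis by simp
    qed
    ultimately show False using cardE cardS2 by linarith
  qed
  have cardE': "card E' = card S - 1"
  proof -
    have "card E' = card (E - {{a2, b}}) + 1" unfolding E'_def using notin finE by simp
    moreover have "card E > 0" using E2 finE card_gt_0_iff by auto
    ultimately show ?thesis using cdiff cardE by linarith
  qed
  have treeE': "steiner_tree V T (S, E')"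
    unfolding steiner_tree_def is_tree_def using SV TS finS neS subE' conE' cardE' by simp
  have ewE: "ew w' e = ew euclid_w e + (if e = {a2, b} then c else 0)" if eS: "e \<in> graph_edges S" for e
  proof -
    obtain u v where uv: "e = {u, v}" "u \<noteq> v" using eS unfolding graph_edges_def by auto
    have "ew w' e = w' u v" using uv ew_eq[of u v w'] wsym by simp
    moreover have "ew euclid_w e = euclid_w u v"
      using uv ew_eq[of u v euclid_w] by (simp add: euclid_w_def norm_minus_commute)
    ultimately show ?thesis using uv unfolding w'_def euclid_w_def by simp
  qed
  define W where "W = sum (ew euclid_w) E"
  have wO: "tree_weight w' OPT = W + c"
  proof -
    have "tree_weight w' OPT = sum (\<lambda>e. ew euclid_w e + (if e = {a2, b} then c else 0)) E"
      unfolding tw_ew OPT using ewE subE by (auto intro: sum.cong)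
    also have "\<dots> = W + c" unfolding W_def sum.distrib using finE E2 by simp
    finally show ?thesis .
  qed
  have ew2b: "ew euclid_w {a2, b} = norm (a2 - b)"
    using ew_eq[of a2 b euclid_w] a2b by (simp add: euclid_w_def norm_minus_commute)
  have ew12: "ew w' {a1, a2} = norm (a1 - a2)"
    using ew_eq[of a1 a2 w'] a12 wsym ne12 unfolding w'_def by simp
  have wT: "tree_weight w' (S, E') = norm (a1 - a2) + W - norm (a2 - b)"
  proof -
    have "tree_weight w' (S, E') = ew w' {a1, a2} + sum (ew w') (E - {{a2, b}})"
      unfolding tw_ew E'_def using notin finE by simp
    also have "sum (ew w') (E - {{a2, b}}) = sum (ew euclid_w) (E - {{a2, b}})"
    proof (rule sum.cong)
      fix e assume "e \<in> E - {{a2, b}}"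
      then show "ew w' e = ew euclid_w e" using ewE[of e] subE by auto
    qed simp
    also have "\<dots> = W - norm (a2 - b)" unfolding W_def using sum_diff1[OF finE, of "ew euclid_w" "{a2, b}"] E2 ew2b by simp
    finally show ?thesis using ew12 by simp
  qed
  have n2: "norm (a2 - b) > 0" using a2b by simp
  have "a1 - a2 = (a1 - b) - (a2 - b)" by simp
  then have "(norm (a1 - a2))\<^sup>2 = (norm (a1 - b))\<^sup>2 + (norm (a2 - b))\<^sup>2 - 2 * ((a1 - b) \<bullet> (a2 - b))"
    by (simp add: power2_norm_eq_inner inner_diff inner_commute algebra_simps)
  also have "\<dots> \<le> 2 * (norm (a2 - b))\<^sup>2" proof -
    have "(norm (a1 - b))\<^sup>2 \<le> (norm (a2 - b))\<^sup>2" using le by (simp add: power_mono)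
    then show ?thesis using dot by linarith
  qed
  also have "\<dots> < (\<gamma> * norm (a2 - b))\<^sup>2"
  proof -
    have "2 < \<gamma>\<^sup>2" proof -
      have "(sqrt 2)\<^sup>2 < \<gamma>\<^sup>2" using g by (intro power_strict_mono) auto
      then show ?thesis by simp
    qed
    moreover have "(norm (a2 - b))\<^sup>2 > 0" using n2 by simp
    ultimately have "2 * (norm (a2 - b))\<^sup>2 < \<gamma>\<^sup>2 * (norm (a2 - b))\<^sup>2"
      by (rule mult_strict_right_mono)
    then show ?thesis by (simp only: power_mult_distrib)
  qed
  finally have sq: "(norm (a1 - a2))\<^sup>2 < (\<gamma> * norm (a2 - b))\<^sup>2" .
  have "0 \<le> \<gamma> * norm (a2 - b)" using g1 by simp
  from power_less_imp_less_base[OF sq this]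
  have "norm (a1 - a2) < \<gamma> * norm (a2 - b)" .
  then have less: "tree_weight w' (S, E') < tree_weight w' OPT"
    using wO wT unfolding c_def by (simp add: algebra_simps)
  define ST where "ST = {t. steiner_tree V T t}"
  have "ST \<subseteq> Pow V \<times> Pow (Pow V)"
  proof
    fix t assume "t \<in> ST"
    then have "fst t \<subseteq> V" "snd t \<subseteq> graph_edges (fst t)"
      unfolding ST_def steiner_tree_def is_tree_def by auto
    then have "fst t \<subseteq> V" "snd t \<subseteq> Pow V" using graph_edges_sub by blast+
    then show "t \<in> Pow V \<times> Pow (Pow V)" by (cases t) auto
  qed
  then have finST: "finite ST" using finV by (auto intro: finite_subset)
  have inST: "(S, E') \<in> ST" using treeE' unfolding ST_def by simp
  define t0 where "t0 = arg_min_on (tree_weight w') ST"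
  have t0: "t0 \<in> ST" "\<not> (\<exists>x\<in>ST. tree_weight w' x < tree_weight w' t0)"
    using arg_min_if_finite[OF finST] inST unfolding t0_def by blast+
  have "min_steiner_tree V T w' t0"
    using t0 unfolding min_steiner_tree_def ST_def by (auto simp: not_less)
  then have "t0 = OPT" by (rule uniq)
  then show False using t0(2) inST less by auto
qed


theorem mainTheorem11:
  fixes V T :: "'a::euclidean_space set" and OPT :: "'a set \<times> 'a set set"
    and \<gamma> :: real and a1 a2 b :: 'a
  assumes "finite V" and "T \<subseteq> V"
    and "\<gamma> > sqrt 2"
    and "gamma_stable \<gamma> V T OPT"
    and "a1 \<in> T" and "a2 \<in> T" and "a1 \<noteq> a2"
    and "b \<in> V - T"
    and "{a1, b} \<in> snd OPT" and "{a2, b} \<in> snd OPT"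
  shows "vangle a1 b a2 > pi / 2"
proof -
  have dot: "(a1 - b) \<bullet> (a2 - b) < 0"
  proof (cases "norm (a1 - b) \<le> norm (a2 - b)")
    case True
    show ?thesis using core[OF assms True] by simp
  next
    case False
    then have "norm (a2 - b) \<le> norm (a1 - b)" by simp
    from core[OF assms(1-4,6,5) assms(7)[symmetric] assms(8,10,9) this]
    show ?thesis by (simp add: inner_commute)
  qed
  have p1: "norm (a1 - b) > 0" and p2: "norm (a2 - b) > 0" using assms(5,6,8) by auto
  define x where "x = ((a1 - b) \<bullet> (a2 - b)) / (norm (a1 - b) * norm (a2 - b))"
  have pp: "norm (a1 - b) * norm (a2 - b) > 0" using p1 p2 by simp
  have xneg: "x < 0" unfolding x_def using dot pp by (simp add: divide_neg_pos)
  have "\<bar>(a1 - b) \<bullet> (a2 - b)\<bar> \<le> norm (a1 - b) * norm (a2 - b)" by (rule Cauchy_Schwarz_ineq2)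
  then have "- ((a1 - b) \<bullet> (a2 - b)) \<le> norm (a1 - b) * norm (a2 - b)" by linarith
  then have "-1 \<le> x" unfolding x_def using pp by (simp add: field_simps)
  then have "arccos 0 < arccos x" using xneg by (intro arccos_less_arccos) auto
  then show ?thesis unfolding vangle_def x_def[symmetric] by simp
qed

end
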